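(* Let $E$ be a real Hilbert space with $\dim(E)\ge2$, $h\in E$ a unit vector, and $f:\mathbb{R}_{\ge0}\to\mathbb{R}_{\ge0}$ with $f(d)=0$ iff $d=0$. Let $x\preceq_f y\iff f(\|y_\perp-x_\perp\|)\le y_h-x_h$. Then the relation $\preceq_f$ is topologically closed in $E\times E$ if and only if $f$ is lower semicontinuous.
   Context: For $x\in E$ write $x=x_h h+x_\perp$ with $x_h=(x,h)$ and $x_\perp$ orthogonal to $h$. *)

theory Defs
  imports "HOL-Analysis.Analysis"
begin

definition comp_h :: "'a::real_inner \<Rightarrow> 'a \<Rightarrow> real" where
  "comp_h h x = x \<bullet> h"

definition perp_h :: "'a::real_inner \<Rightarrow> 'a \<Rightarrow> 'a" where
  "perp_h h x = x - (x \<bullet> h) *\<^sub>R h"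

definition cone_le :: "(real \<Rightarrow> real) \<Rightarrow> 'a::real_inner \<Rightarrow> 'a \<Rightarrow> 'a \<Rightarrow> bool" where
  "cone_le f h x y \<longleftrightarrow> f (norm (perp_h h y - perp_h h x)) \<le> comp_h h y - comp_h h x"

definition lower_semicontinuous_on :: "real set \<Rightarrow> (real \<Rightarrow> real) \<Rightarrow> bool" where
  "lower_semicontinuous_on S f \<longleftrightarrow>
     (\<forall>x\<in>S. \<forall>e>0. \<exists>d>0. \<forall>y\<in>S. dist y x < d \<longrightarrow> f x - e < f y)"

end

theory Submission
  imports Defs
begin

lemma perp_lin: "norm h = 1 \<Longrightarrow> u \<bullet> h = 0 \<Longrightarrow> perp_h h (d *\<^sub>R u + c *\<^sub>R h) = d *\<^sub>R u"
  by (simp add: perp_h_def inner_add_left dot_square_norm power2_eq_square)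

lemma comp_lin: "norm h = 1 \<Longrightarrow> u \<bullet> h = 0 \<Longrightarrow> comp_h h (d *\<^sub>R u + c *\<^sub>R h) = c"
  by (simp add: comp_h_def inner_add_left dot_square_norm power2_eq_square)

lemma exists_orth:
  fixes h :: "'a::real_inner"
  assumes dim2: "\<exists>u v::'a. u \<noteq> v \<and> independent {u, v}" and unit: "norm h = 1"
  shows "\<exists>u. norm u = 1 \<and> u \<bullet> h = 0"
proof -
  have hh: "h \<bullet> h = 1" using unit by (simp add: dot_square_norm)
  have key: "\<exists>u. norm u = 1 \<and> u \<bullet> h = 0" if "perp_h h w \<noteq> 0" for w
  proof -
    have "perp_h h w \<bullet> h = 0" by (simp add: perp_h_def inner_diff_left hh)
    then show ?thesis using that
      by (intro exI[of _ "perp_h h w /\<^sub>R norm (perp_h h w)"]) auto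
  qed
  obtain u v :: 'a where uv: "u \<noteq> v" "independent {u, v}" using dim2 by blast
  show ?thesis
  proof (rule ccontr)
    assume "\<not> ?thesis"
    then have all: "\<And>w. w = (w \<bullet> h) *\<^sub>R h" using key by (fastforce simp: perp_h_def)
    have u0: "v \<noteq> 0" using uv dependent_zero by blast
    have "v \<bullet> h \<noteq> 0" using all[of v] u0 by (metis scale_zero_left)
    have "u = ((u \<bullet> h) / (v \<bullet> h)) *\<^sub>R v"
      using all[of u] all[of v] \<open>v \<bullet> h \<noteq> 0\<close> by (metis (no_types, lifting) divide_eq_0_iff nonzero_divide_eq_eq scaleR_scaleR)
    then have "u \<in> span {v}" by (metis span_base span_mul singletonI)
    moreover have "u \<notin> span {v}"
      using uv by (simp add: independent_insert)
    ultimately show False by blast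
  qed
qed

theorem mainTheorem14:
  fixes h :: "'a::{real_inner, complete_space}" and f :: "real \<Rightarrow> real"
  assumes dim2: "\<exists>u v::'a. u \<noteq> v \<and> independent {u, v}"
    and unit: "norm h = 1"
    and fnonneg: "\<forall>d\<ge>0. f d \<ge> 0"
    and fzero: "\<forall>d\<ge>0. f d = 0 \<longleftrightarrow> d = 0"
  shows "closed {(x, y). cone_le f h x y} \<longleftrightarrow> lower_semicontinuous_on {0..} f"
proof
  assume cl: "closed {(x, y). cone_le f h x y}"
  obtain u where u: "norm u = 1" "u \<bullet> h = 0" using exists_orth[OF dim2 unit] by blast
  show "lower_semicontinuous_on {0..} f"
    unfolding lower_semicontinuous_on_def
  proof (rule ccontr)
    assume "\<not> (\<forall>x\<in>{0..}. \<forall>e>0. \<exists>d>0. \<forall>y\<in>{0..}. dist y x < d \<longrightarrow> f x - e < f y)"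
    then obtain d0 e where d0: "d0 \<ge> 0" "e > 0" and
      bad0: "\<forall>d>0. \<exists>y\<in>{0..}. dist y d0 < d \<and> \<not> f d0 - e < f y"
      by blast
    have bad: "\<exists>y\<ge>0. dist y d0 < d \<and> f y \<le> f d0 - e" if "d > 0" for d
      using bad0 that by (auto simp: not_less)
    have "\<forall>n::nat. \<exists>y\<ge>0. dist y d0 < 1 / (real n + 1) \<and> f y \<le> f d0 - e"
      using bad by simp
    then obtain s where s: "\<And>n. s n \<ge> 0" "\<And>n. dist (s n) d0 < 1 / (real n + 1)"
      "\<And>n. f (s n) \<le> f d0 - e" by metis
    have lo: "\<forall>\<^sub>F n in sequentially. d0 - 1 / (real n + 1) \<le> s n"
    proof (intro always_eventually allI)
      fix n show "d0 - 1 / (real n + 1) \<le> s n" using s(2)[of n] by (simp add: dist_real_def abs_less_iff)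
    qed
    have hi: "\<forall>\<^sub>F n in sequentially. s n \<le> d0 + 1 / (real n + 1)"
    proof (intro always_eventually allI)
      fix n show "s n \<le> d0 + 1 / (real n + 1)" using s(2)[of n] by (simp add: dist_real_def abs_less_iff)
    qed
    have "s \<longlonglongrightarrow> d0"
    proof (rule tendsto_sandwich[OF lo hi])
      show "(\<lambda>n. d0 - 1 / (real n + 1)) \<longlonglongrightarrow> d0"
        using tendsto_diff[OF tendsto_const LIMSEQ_inverse_real_of_nat_add[of 0]]
        by (simp add: inverse_eq_divide add.commute)
      show "(\<lambda>n. d0 + 1 / (real n + 1)) \<longlonglongrightarrow> d0"
        using tendsto_add[OF tendsto_const LIMSEQ_inverse_real_of_nat_add[of 0]]
        by (simp add: inverse_eq_divide add.commute)
    qed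
    define c where "c = f d0 - e"
    have z1: "perp_h h 0 = 0" and z2: "comp_h h 0 = 0" by (simp_all add: perp_h_def comp_h_def)
    define Y where "Y n = (0::'a, s n *\<^sub>R u + c *\<^sub>R h)" for n
    have inR: "Y n \<in> {(x, y). cone_le f h x y}" for n
    proof -
      have "perp_h h (s n *\<^sub>R u + c *\<^sub>R h) - perp_h h 0 = s n *\<^sub>R u"
        using perp_lin[OF unit u(2)] z1 by simp
      moreover have "comp_h h (s n *\<^sub>R u + c *\<^sub>R h) - comp_h h 0 = c"
        using comp_lin[OF unit u(2)] z2 by simp
      moreover have "norm (s n *\<^sub>R u) = s n" using u(1) s(1)[of n] by simp
      ultimately show ?thesis using s(3)[of n] unfolding Y_def cone_le_def c_def by simp
    qed
    have "Y \<longlonglongrightarrow> (0, d0 *\<^sub>R u + c *\<^sub>R h)"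
      unfolding Y_def by (intro tendsto_intros \<open>s \<longlonglongrightarrow> d0\<close>)
    then have mem: "(0, d0 *\<^sub>R u + c *\<^sub>R h) \<in> {(x, y). cone_le f h x y}"
      using cl closed_sequentially inR by blast
    show False
    proof -
      have "perp_h h (d0 *\<^sub>R u + c *\<^sub>R h) - perp_h h 0 = d0 *\<^sub>R u"
        using perp_lin[OF unit u(2)] z1 by simp
      moreover have "comp_h h (d0 *\<^sub>R u + c *\<^sub>R h) - comp_h h 0 = c"
        using comp_lin[OF unit u(2)] z2 by simp
      moreover have "norm (d0 *\<^sub>R u) = d0" using u(1) d0(1) by simp
      ultimately show False using mem d0(2) unfolding cone_le_def c_def by simp
    qed
  qed
next
  assume lsc: "lower_semicontinuous_on {0..} f"
  define D where "D p = norm (perp_h h (snd p) - perp_h h (fst p))" for p :: "'a \<times> 'a"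
  define C where "C p = comp_h h (snd p) - comp_h h (fst p)" for p :: "'a \<times> 'a"
  have contD: "continuous_on UNIV D"
    unfolding D_def perp_h_def by (intro continuous_intros)
  have contC: "continuous_on UNIV C"
    unfolding C_def comp_h_def by (intro continuous_intros)
  have eq: "{(x, y). cone_le f h x y} = {p. f (D p) \<le> C p}"
    by (auto simp: cone_le_def D_def C_def)
  show "closed {(x, y). cone_le f h x y}"
    unfolding eq closed_sequential_limits
  proof (intro allI impI, elim conjE)
    fix P l assume P: "\<forall>n. P n \<in> {p. f (D p) \<le> C p}" and lim: "P \<longlonglongrightarrow> l"
    have dl: "(\<lambda>n. D (P n)) \<longlonglongrightarrow> D l"
      unfolding D_def perp_h_def by (intro tendsto_intros lim)
    have cl: "(\<lambda>n. C (P n)) \<longlonglongrightarrow> C l"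
      unfolding C_def comp_h_def by (intro tendsto_intros lim)
    show "l \<in> {p. f (D p) \<le> C p}"
    proof (rule ccontr)
      assume "l \<notin> {p. f (D p) \<le> C p}"
      then have gt: "f (D l) > C l" by simp
      define e where "e = (f (D l) - C l) / 2"
      have e: "e > 0" using gt by (simp add: e_def)
      obtain d where d: "d > 0" "\<And>y. y \<ge> 0 \<Longrightarrow> dist y (D l) < d \<Longrightarrow> f (D l) - e < f y"
      proof -
        have "D l \<in> {0..}" by (simp add: D_def)
        then have "\<exists>d>0. \<forall>y\<in>{0..}. dist y (D l) < d \<longrightarrow> f (D l) - e < f y"
          using lsc e unfolding lower_semicontinuous_on_def by blast
        then show ?thesis using that by auto
      qed
      have ev1: "\<forall>\<^sub>F n in sequentially. dist (D (P n)) (D l) < d"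
        using dl d(1) unfolding tendsto_iff by blast
      have ev2: "\<forall>\<^sub>F n in sequentially. C (P n) < C l + e"
        using cl e order_tendstoD(2) by (metis less_add_same_cancel1)
      obtain n where "dist (D (P n)) (D l) < d" "C (P n) < C l + e"
        using eventually_happens'[OF _ eventually_conj[OF ev1 ev2]] by auto
      moreover have "D (P n) \<ge> 0" by (simp add: D_def)
      ultimately have "f (D l) - e < f (D (P n))" "f (D (P n)) \<le> C (P n)" "C (P n) < C l + e"
        using d P by auto
      moreover have "2 * e = f (D l) - C l" by (simp add: e_def)
      ultimately show False by linarith
    qed
  qed
qed

end
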